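(* Let $X,Y$ be random variables on finite sets $\mathcal{X},\mathcal{Y}$ with joint pmf $P_{XY}$. Let $\lambda_{\min}<\lambda_{\max}$ and $\Delta>0$ be such that $N=(\lambda_{\max}-\lambda_{\min})/\Delta$ is a positive integer, and let $l$ be a hash length. Run the Interactive Slepian–Wolf protocol described in the context with parameters $l$ and $\Delta$, and let $\hat X=\hat X(x,y)$ denote party 2's estimate at the end, with the convention $\hat X=\emptyset$ if an error is declared. Then for every $1\le i\le N$ and every $(x,y)\in\mathcal{T}_i$: (i) the protocol sends at most $l+(i-1)\Delta+i$ bits; (ii) $\Pr(\hat X\neq x\mid X=x,Y=y)\le i\,2^{\lambda_{\min}+\Delta-l}$.
   Context: All logarithms are to base 2, and $h(x|y)=-\log P_{X|Y}(x|y)$. Put $\lambda_i=\lambda_{\min}+(i-1)\Delta$, and for $1\le i\le N$ let $\mathcal{T}_i=\{(x,y):\lambda_i\le h(x|y)<\lambda_i+\Delta\}$. The parameters $l$ and $\Delta$ are used as hash lengths in bits (implicitly integers). The Interactive Slepian–Wolf protocol uses public randomness shared by both parties and proceeds in rounds as follows. Round 1. A map $h_1$ is drawn uniformly from all maps $\mathcal{X}\to\{0,1\}^l$, and party 1 sends $\Pi_1=h_1(X)$. If party 2 finds a unique $x$ with $(x,Y)\in\mathcal{T}_1$ and $h_1(x)=\Pi_1$, it sets $\hat X=x$ and sends a one-bit ACK; otherwise it sends a one-bit NACK. Round $i$, for $i=2,\dots,N$, performed only while no ACK has been sent. A map $h_i$ is drawn uniformly from all maps $\mathcal{X}\to\{0,1\}^\Delta$,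 independently of earlier maps, and party 1 sends $\Pi_{2i-1}=h_i(X)$. Party 2 looks for $x$ with $(x,Y)\in\mathcal{T}_i$ and $h_j(x)=\Pi_{2j-1}$ for all $j\le i$. - If exactly one such $x$ exists, party 2 sets $\hat X=x$ and sends ACK. - If more than one exists, an error is declared. - If none exists, party 2 sends NACK. Termination. If no $\hat X$ is found at the end, an error is declared. *)

theory Defs
  imports "HOL-Probability.Probability"
begin

definition condp :: "('x \<times> 'y) pmf \<Rightarrow> 'x \<Rightarrow> 'y \<Rightarrow> real" where
  "condp PXY x y = pmf PXY (x, y) / measure_pmf.prob PXY {p. snd p = y}"

definition hcond :: "('x \<times> 'y) pmf \<Rightarrow> 'x \<Rightarrow> 'y \<Rightarrow> real" where
  "hcond PXY x y = - log 2 (condp PXY x y)"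

text \<open>The slice T_i (i >= 1); pairs with P(x|y)=0 have h = +infinity and lie in no slice.\<close>
definition Tset :: "('x \<times> 'y) pmf \<Rightarrow> real \<Rightarrow> nat \<Rightarrow> nat \<Rightarrow> ('x \<times> 'y) set" where
  "Tset PXY lmin \<Delta> i = {(x, y). condp PXY x y > 0 \<and>
      lmin + (real i - 1) * real \<Delta> \<le> hcond PXY x y \<and>
      hcond PXY x y < lmin + (real i - 1) * real \<Delta> + real \<Delta>}"

definition hash_len :: "nat \<Rightarrow> nat \<Rightarrow> nat \<Rightarrow> nat" where
  "hash_len l \<Delta> i = (if i = 1 then l else \<Delta>)"

text \<open>Public randomness: a family of maps h_1..h_N, h_i : X -> {0,1}^{len i}
  (bit strings encoded as naturals below 2^{len i}); unused indices are fixed to 0.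
  The uniform distribution on this set is the product of independent uniform maps.\<close>
definition hash_space :: "nat \<Rightarrow> nat \<Rightarrow> nat \<Rightarrow> (nat \<Rightarrow> 'x \<Rightarrow> nat) set" where
  "hash_space l \<Delta> N = {H. \<forall>i x. (i \<in> {1..N} \<longrightarrow> H i x < 2 ^ hash_len l \<Delta> i) \<and>
                                 (i \<notin> {1..N} \<longrightarrow> H i x = 0)}"

definition cands :: "('x \<times> 'y) pmf \<Rightarrow> real \<Rightarrow> nat \<Rightarrow> (nat \<Rightarrow> 'x \<Rightarrow> nat) \<Rightarrow> 'x \<Rightarrow> 'y \<Rightarrow> nat \<Rightarrow> 'x set" where
  "cands PXY lmin \<Delta> H x y i =
     {x'. (x', y) \<in> Tset PXY lmin \<Delta> i \<and> (\<forall>j\<in>{1..i}. H j x' = H j x)}"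

text \<open>Round at which the protocol stops: the first round with a nonempty candidate set
  (ACK or error), or N if every round ended with NACK.\<close>
definition stop_round :: "('x \<times> 'y) pmf \<Rightarrow> real \<Rightarrow> nat \<Rightarrow> nat \<Rightarrow> (nat \<Rightarrow> 'x \<Rightarrow> nat) \<Rightarrow> 'x \<Rightarrow> 'y \<Rightarrow> nat" where
  "stop_round PXY lmin \<Delta> N H x y =
     (if \<exists>i\<in>{1..N}. cands PXY lmin \<Delta> H x y i \<noteq> {}
      then (LEAST i. i \<in> {1..N} \<and> cands PXY lmin \<Delta> H x y i \<noteq> {}) else N)"

text \<open>Party 2's estimate; None encodes an error (X-hat = empty set).\<close>
definition estimate :: "('x \<times> 'y) pmf \<Rightarrow> real \<Rightarrow> nat \<Rightarrow> nat \<Rightarrow> (nat \<Rightarrow> 'x \<Rightarrow> nat) \<Rightarrow> 'x \<Rightarrow> 'y \<Rightarrow> 'x option" where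
  "estimate PXY lmin \<Delta> N H x y =
     (if \<exists>i\<in>{1..N}. cands PXY lmin \<Delta> H x y i \<noteq> {}
      then (let C = cands PXY lmin \<Delta> H x y (stop_round PXY lmin \<Delta> N H x y) in
            if card C = 1 then Some (the_elem C) else None)
      else None)"

text \<open>Number of bits communicated: in each round r up to the stopping round,
  party 1 sends hash_len r bits and party 2 sends one feedback bit.\<close>
definition bits_sent :: "('x \<times> 'y) pmf \<Rightarrow> real \<Rightarrow> nat \<Rightarrow> nat \<Rightarrow> nat \<Rightarrow> (nat \<Rightarrow> 'x \<Rightarrow> nat) \<Rightarrow> 'x \<Rightarrow> 'y \<Rightarrow> nat" where
  "bits_sent PXY lmin l \<Delta> N H x y =
     (\<Sum>r\<in>{1..stop_round PXY lmin \<Delta> N H x y}. hash_len l \<Delta> r + 1)"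

end

theory Submission
  imports Defs
begin

lemma sum_hash1: "1 \<le> s \<Longrightarrow> (\<Sum>r\<in>{1..s}. hash_len l \<Delta> r + 1) = l + (s-1)*\<Delta> + s"
proof (induction s)
  case 0 then show ?case by simp
next
  case (Suc s)
  show ?case
  proof (cases "s = 0")
    case True then show ?thesis by (simp add: hash_len_def)
  next
    case False
    then have "(\<Sum>r\<in>{1..Suc s}. hash_len l \<Delta> r + 1) = (\<Sum>r\<in>{1..s}. hash_len l \<Delta> r + 1) + (\<Delta> + 1)"
      by (simp add: hash_len_def)
    also have "\<dots> = l + (s-1)*\<Delta> + s + (\<Delta>+1)" using Suc False by simp
    finally show ?thesis using False by (cases s) (auto simp: algebra_simps)
  qed
qed

lemma sum_hash2: "1 \<le> s \<Longrightarrow> (\<Sum>r\<in>{1..s}. hash_len l \<Delta> r) = l + (s-1)*\<Delta>"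
proof (induction s)
  case 0 then show ?case by simp
next
  case (Suc s)
  show ?case
  proof (cases "s = 0")
    case True then show ?thesis by (simp add: hash_len_def)
  next
    case False
    then have "(\<Sum>r\<in>{1..Suc s}. hash_len l \<Delta> r) = (\<Sum>r\<in>{1..s}. hash_len l \<Delta> r) + \<Delta>"
      by (simp add: hash_len_def)
    also have "\<dots> = l + (s-1)*\<Delta> + \<Delta>" using Suc False by simp
    finally show ?thesis using False by (cases s) (auto simp: algebra_simps)
  qed
qed

lemma hs_nonempty: "(\<lambda>_ _. 0) \<in> hash_space l \<Delta> N"
  by (simp add: hash_space_def)

lemma hs_finite: "finite (hash_space l \<Delta> N :: (nat \<Rightarrow> 'x::finite \<Rightarrow> nat) set)"
proof -
  define M where "M = (2::nat) ^ (l + \<Delta>)"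
  let ?f = "\<lambda>H::nat \<Rightarrow> 'x \<Rightarrow> nat. restrict (\<lambda>(k,z). H k z) ({1..N} \<times> UNIV)"
  have "inj_on ?f (hash_space l \<Delta> N)"
  proof (rule inj_onI)
    fix H G assume H: "H \<in> hash_space l \<Delta> N" and G: "G \<in> hash_space l \<Delta> N" and e: "?f H = ?f G"
    show "H = G"
    proof (intro ext)
      fix k z
      show "H k z = G k z"
      proof (cases "k \<in> {1..N}")
        case True
        then show ?thesis using fun_cong[OF e, of "(k,z)"] by simp
      next
        case False
        then show ?thesis using H G by (simp add: hash_space_def)
      qed
    qed
  qed
  moreover have "?f ` hash_space l \<Delta> N \<subseteq> PiE ({1..N} \<times> UNIV) (\<lambda>_. {..<M})"
  proof
    fix F assume "F \<in> ?f ` hash_space l \<Delta> N"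
    then obtain H where H: "H \<in> hash_space l \<Delta> N" and F: "F = ?f H" by blast
    have "H k z < M" if "k \<in> {1..N}" for k z
    proof -
      have "H k z < 2 ^ hash_len l \<Delta> k" using H that by (simp add: hash_space_def)
      also have "\<dots> \<le> M" unfolding M_def by (intro power_increasing) (auto simp: hash_len_def)
      finally show ?thesis .
    qed
    then show "F \<in> PiE ({1..N} \<times> UNIV) (\<lambda>_. {..<M})" using F by auto
  qed
  moreover have "finite (PiE ({1..N} \<times> (UNIV::'x set)) (\<lambda>_. {..<M}))"
    by (intro finite_PiE) auto
  ultimately show ?thesis by (rule inj_on_finite)
qed

lemma card_bound:
  fixes x x' :: "'x::finite"
  assumes "x' \<noteq> x" "1 \<le> j" "j \<le> N"
  shows "card (hash_space l \<Delta> N \<inter> {H. \<forall>k\<in>{1..j}. H k x' = H k x}) * 2 ^ (l + (j-1)*\<Delta>)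
           \<le> card (hash_space l \<Delta> N :: (nat \<Rightarrow> 'x \<Rightarrow> nat) set)"
proof -
  let ?S = "hash_space l \<Delta> N :: (nat \<Rightarrow> 'x \<Rightarrow> nat) set"
  let ?A = "?S \<inter> {H. \<forall>k\<in>{1..j}. H k x' = H k x}"
  let ?T = "PiE {1..j} (\<lambda>k. {..<(2::nat) ^ hash_len l \<Delta> k})"
  let ?f = "\<lambda>(H::nat \<Rightarrow> 'x \<Rightarrow> nat, t::nat \<Rightarrow> nat). (\<lambda>k z. if z = x' \<and> k \<in> {1..j} then t k else H k z)"
  have inj: "inj_on ?f (?A \<times> ?T)"
  proof (rule inj_onI)
    fix p q assume p: "p \<in> ?A \<times> ?T" and q: "q \<in> ?A \<times> ?T" and e0: "?f p = ?f q"
    obtain H t where pHt: "p = (H, t)" by (cases p)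
    obtain G u where qGu: "q = (G, u)" by (cases q)
    have H: "H \<in> ?A" and t: "t \<in> ?T" using p pHt by auto
    have G: "G \<in> ?A" and u: "u \<in> ?T" using q qGu by auto
    have e: "?f (H, t) = ?f (G, u)" using e0 pHt qGu by simp
    have e2: "(if z = x' \<and> k \<in> {1..j} then t k else H k z) = (if z = x' \<and> k \<in> {1..j} then u k else G k z)" for k z
      using fun_cong[OF fun_cong[OF e, of k], of z] by (simp only: case_prod_conv)
    have "t = u"
    proof
      fix k show "t k = u k"
      proof (cases "k \<in> {1..j}")
        case True then show ?thesis using e2[of x' k] by (simp only: simp_thms if_True)
      next
        case False then show ?thesis by (simp only: PiE_arb[OF t False] PiE_arb[OF u False])
      qed
    qed
    moreover have "H = G"
    proof (intro ext)
      fix k z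
      show "H k z = G k z"
      proof (cases "z = x' \<and> k \<in> {1..j}")
        case True
        then have "H k z = H k x" "G k z = G k x" using H G by auto
        moreover have "H k x = G k x" using e2[of x k] assms(1) by simp
        ultimately show ?thesis by simp
      next
        case False then show ?thesis using e2[of z k] by (simp only: if_not_P[OF False] if_False)
      qed
    qed
    ultimately show "p = q" using pHt qGu by simp
  qed
  have img: "?f ` (?A \<times> ?T) \<subseteq> ?S"
  proof (rule subsetI)
    fix g assume "g \<in> ?f ` (?A \<times> ?T)"
    then obtain H t where H: "H \<in> ?A" and t: "t \<in> ?T" and g: "g = ?f (H, t)" by auto
    have "(\<lambda>k z. if z = x' \<and> k \<in> {1..j} then t k else H k z) \<in> ?S"
      unfolding hash_space_def
    proof (intro CollectI allI conjI impI)
      fix i z assume i: "i \<in> {1..N}"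
      show "(if z = x' \<and> i \<in> {1..j} then t i else H i z) < 2 ^ hash_len l \<Delta> i"
      proof (cases "z = x' \<and> i \<in> {1..j}")
        case True
        then have "t i \<in> {..<(2::nat) ^ hash_len l \<Delta> i}" using t by blast
        then show ?thesis by (subst if_P[OF True]) simp
      next
        case False
        have "H i z < 2 ^ hash_len l \<Delta> i" using H i unfolding hash_space_def by blast
        then show ?thesis by (subst if_not_P[OF False]) simp
      qed
    next
      fix i z assume i: "i \<notin> {1..N}"
      then have "i \<notin> {1..j}" using assms by auto
      moreover have "H i z = 0" using H i unfolding hash_space_def by blast
      ultimately show "(if z = x' \<and> i \<in> {1..j} then t i else H i z) = 0"
        by auto
    qed
    then show "g \<in> ?S" using g by (simp only: case_prod_conv)
  qed
  have "card (?A \<times> ?T) \<le> card ?S"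
    by (rule card_inj_on_le[OF inj img hs_finite])
  moreover have "card ?T = 2 ^ (l + (j-1)*\<Delta>)"
  proof -
    have "card ?T = (\<Prod>k\<in>{1..j}. card {..<(2::nat) ^ hash_len l \<Delta> k})"
      by (rule card_PiE) simp
    also have "\<dots> = (\<Prod>k\<in>{1..j}. (2::nat) ^ hash_len l \<Delta> k)" by simp
    also have "\<dots> = 2 ^ (\<Sum>k\<in>{1..j}. hash_len l \<Delta> k)" by (rule power_sum[symmetric])
    also have "\<dots> = 2 ^ (l + (j-1)*\<Delta>)" by (simp only: sum_hash2[OF assms(2)])
    finally show ?thesis .
  qed
  ultimately show ?thesis by (simp add: card_cartesian_product)
qed

lemma count_bound:
  fixes PXY :: "('x::finite \<times> 'y) pmf"
  shows "real (card {x'. (x', y) \<in> Tset PXY lmin \<Delta> j}) \<le> 2 powr (lmin + real j * real \<Delta>)"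
proof -
  define B where "B = {x'. (x', y) \<in> Tset PXY lmin \<Delta> j}"
  define P where "P = measure_pmf.prob PXY {p. snd p = y}"
  define L where "L = lmin + real j * real \<Delta>"
  have cB: "condp PXY x' y > 2 powr (-L)" if "x' \<in> B" for x'
  proof -
    have c0: "condp PXY x' y > 0" and h: "hcond PXY x' y < L"
      using that by (auto simp: B_def Tset_def L_def algebra_simps)
    have "-L < log 2 (condp PXY x' y)" using h by (simp add: hcond_def)
    then show ?thesis using less_log_iff[of 2 "condp PXY x' y" "-L"] c0 by simp
  qed
  show ?thesis
  proof (cases "B = {}")
    case True then show ?thesis by (simp add: B_def[symmetric])
  next
    case False
    then obtain x0 where x0: "x0 \<in> B" by blast
    have P0: "P > 0"
    proof (rule ccontr)
      assume "\<not> P > 0"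
      then have "P = 0" using measure_nonneg[of PXY] unfolding P_def
        by (metis order_less_le)
      then have "condp PXY x0 y = 0" by (simp add: condp_def P_def)
      then show False using cB[OF x0] by (smt (verit) powr_gt_zero)
    qed
    have inj: "inj_on (\<lambda>x'. (x', y)) B" by (rule inj_onI) simp
    have "(\<Sum>x'\<in>B. pmf PXY (x', y)) = sum (pmf PXY) ((\<lambda>x'. (x', y)) ` B)"
      by (simp add: sum.reindex[OF inj] comp_def)
    also have "\<dots> = measure_pmf.prob PXY ((\<lambda>x'. (x', y)) ` B)"
      by (rule measure_measure_pmf_finite[symmetric]) simp
    also have "\<dots> \<le> P" unfolding P_def
      by (rule measure_pmf.finite_measure_mono) auto
    finally have sP: "(\<Sum>x'\<in>B. pmf PXY (x', y)) \<le> P" .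
    have "real (card B) * 2 powr (-L) = (\<Sum>x'\<in>B. 2 powr (-L))" by simp
    also have "\<dots> \<le> (\<Sum>x'\<in>B. condp PXY x' y)"
      by (rule sum_mono) (use cB in \<open>auto intro: less_imp_le\<close>)
    also have "\<dots> = (\<Sum>x'\<in>B. pmf PXY (x', y)) / P"
      by (simp add: condp_def P_def sum_divide_distrib)
    also have "\<dots> \<le> 1" using sP P0 by simp
    finally have "real (card B) * 2 powr (-L) \<le> 1" .
    then have "real (card B) * 2 powr (-L) * 2 powr L \<le> 2 powr L"
      by (simp add: mult_right_mono)
    then show ?thesis by (simp add: B_def L_def powr_add[symmetric] mult.assoc)
  qed
qed

lemma stop_facts:
  assumes i: "i \<in> {1..N}" and xy: "(x, y) \<in> Tset PXY lmin \<Delta> i"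
  shows "stop_round PXY lmin \<Delta> N H x y \<in> {1..i}"
    and "cands PXY lmin \<Delta> H x y (stop_round PXY lmin \<Delta> N H x y) \<noteq> {}"
    and "\<exists>i\<in>{1..N}. cands PXY lmin \<Delta> H x y i \<noteq> {}"
proof -
  let ?Q = "\<lambda>i. i \<in> {1..N} \<and> cands PXY lmin \<Delta> H x y i \<noteq> {}"
  have xc: "x \<in> cands PXY lmin \<Delta> H x y i" using xy by (simp add: cands_def)
  then have Qi: "?Q i" using i by blast
  then show ex: "\<exists>i\<in>{1..N}. cands PXY lmin \<Delta> H x y i \<noteq> {}" by blast
  have sr: "stop_round PXY lmin \<Delta> N H x y = (LEAST i. ?Q i)"
    using ex by (simp add: stop_round_def)
  have "?Q (LEAST i. ?Q i)" by (rule LeastI[of ?Q i, OF Qi])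
  moreover have "(LEAST i. ?Q i) \<le> i" by (rule Least_le[of ?Q i, OF Qi])
  ultimately show "stop_round PXY lmin \<Delta> N H x y \<in> {1..i}"
      and "cands PXY lmin \<Delta> H x y (stop_round PXY lmin \<Delta> N H x y) \<noteq> {}"
    using sr by auto
qed

lemma err_subset:
  assumes i: "i \<in> {1..N}" and xy: "(x, y) \<in> Tset PXY lmin \<Delta> i"
  shows "{H. estimate PXY lmin \<Delta> N H x y \<noteq> Some x} \<subseteq>
    (\<Union>j\<in>{1..i}. \<Union>x'\<in>{x'. (x', y) \<in> Tset PXY lmin \<Delta> j} - {x}. {H. \<forall>k\<in>{1..j}. H k x' = H k x})"
proof
  fix H assume "H \<in> {H. estimate PXY lmin \<Delta> N H x y \<noteq> Some x}"
  then have ne: "estimate PXY lmin \<Delta> N H x y \<noteq> Some x" by simp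
  define s where "s = stop_round PXY lmin \<Delta> N H x y"
  define C where "C = cands PXY lmin \<Delta> H x y s"
  have s: "s \<in> {1..i}" and Cne: "C \<noteq> {}" and ex: "\<exists>i\<in>{1..N}. cands PXY lmin \<Delta> H x y i \<noteq> {}"
    using stop_facts[OF i xy, of H] by (simp_all add: s_def C_def)
  have est: "estimate PXY lmin \<Delta> N H x y = (if card C = 1 then Some (the_elem C) else None)"
    using ex by (simp add: estimate_def C_def s_def Let_def)
  have "\<exists>x'\<in>C. x' \<noteq> x"
  proof (rule ccontr)
    assume "\<not> (\<exists>x'\<in>C. x' \<noteq> x)"
    then have "C = {x}" using Cne by auto
    then have "estimate PXY lmin \<Delta> N H x y = Some x" using est by simp
    then show False using ne by simp
  qed
  then obtain x' where x'C: "x' \<in> C" and x'x: "x' \<noteq> x" by blast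
  then have "(x', y) \<in> Tset PXY lmin \<Delta> s" "\<forall>k\<in>{1..s}. H k x' = H k x"
    by (auto simp: C_def cands_def)
  then show "H \<in> (\<Union>j\<in>{1..i}. \<Union>x'\<in>{x'. (x', y) \<in> Tset PXY lmin \<Delta> j} - {x}. {H. \<forall>k\<in>{1..j}. H k x' = H k x})"
    using s x'x by blast
qed

lemma prob_A:
  fixes x x' :: "'x::finite"
  assumes "x' \<noteq> x" "1 \<le> j" "j \<le> N"
  shows "measure_pmf.prob (pmf_of_set (hash_space l \<Delta> N :: (nat \<Rightarrow> 'x \<Rightarrow> nat) set))
           {H. \<forall>k\<in>{1..j}. H k x' = H k x} \<le> 2 powr (-(real l + (real j - 1) * real \<Delta>))"
proof -
  let ?S = "hash_space l \<Delta> N :: (nat \<Rightarrow> 'x \<Rightarrow> nat) set"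
  let ?A = "{H. \<forall>k\<in>{1..j}. H k x' = H k x}"
  define n where "n = l + (j-1)*\<Delta>"
  have Sne: "?S \<noteq> {}" using hs_nonempty by blast
  have Sf: "finite ?S" by (rule hs_finite)
  then have cS: "card ?S > 0" using Sne by (simp add: card_gt_0_iff)
  have cb: "card (?S \<inter> ?A) * 2 ^ n \<le> card ?S" unfolding n_def by (rule card_bound[OF assms])
  then have cbr: "real (card (?S \<inter> ?A)) * 2 ^ n \<le> real (card ?S)"
  proof -
    have "real (card (?S \<inter> ?A) * 2 ^ n) \<le> real (card ?S)" using cb by (simp only: of_nat_le_iff)
    then show ?thesis by (simp only: of_nat_mult of_nat_power of_nat_numeral)
  qed
  have "measure_pmf.prob (pmf_of_set ?S) ?A = real (card (?S \<inter> ?A)) / real (card ?S)"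
    by (rule measure_pmf_of_set[OF Sne Sf])
  also have "\<dots> \<le> 1 / 2 ^ n"
  proof -
    have p: "(0::real) < 2 ^ n" by simp
    have "real (card (?S \<inter> ?A)) \<le> real (card ?S) / 2 ^ n"
      using cbr p by (simp add: pos_le_divide_eq)
    then show ?thesis using cS by (simp add: divide_right_mono[of _ _ "real (card ?S)", simplified] field_simps)
  qed
  also have "\<dots> = 2 powr (- real n)"
    by (simp add: powr_minus_divide powr_realpow)
  also have "real n = real l + (real j - 1) * real \<Delta>"
    using assms(2) by (simp add: n_def of_nat_diff)
  finally show ?thesis .
qed

lemma bits_part:
  assumes i: "i \<in> {1..N}" and xy: "(x, y) \<in> Tset PXY lmin \<Delta> i"
  shows "bits_sent PXY lmin l \<Delta> N H x y \<le> l + (i - 1) * \<Delta> + i"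
proof -
  define s where "s = stop_round PXY lmin \<Delta> N H x y"
  have s: "s \<in> {1..i}" using stop_facts(1)[OF i xy, of H] by (simp add: s_def)
  have "bits_sent PXY lmin l \<Delta> N H x y = l + (s-1)*\<Delta> + s"
    using sum_hash1[of s l \<Delta>] s unfolding bits_sent_def s_def[symmetric] by simp
  also have "\<dots> \<le> l + (i - 1) * \<Delta> + i"
    using s by (auto intro!: add_mono mult_le_mono)
  finally show ?thesis .
qed

lemma err_prob:
  fixes PXY :: "('x::finite \<times> 'y) pmf"
  assumes i: "i \<in> {1..N}" and xy: "(x, y) \<in> Tset PXY lmin \<Delta> i"
  shows "measure_pmf.prob (pmf_of_set (hash_space l \<Delta> N :: (nat \<Rightarrow> 'x \<Rightarrow> nat) set))
           {H. estimate PXY lmin \<Delta> N H x y \<noteq> Some x} \<le> real i * 2 powr (lmin + real \<Delta> - real l)"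
proof -
  let ?U = "pmf_of_set (hash_space l \<Delta> N :: (nat \<Rightarrow> 'x \<Rightarrow> nat) set)"
  let ?B = "\<lambda>j. {x'. (x', y) \<in> Tset PXY lmin \<Delta> j} - {x}"
  let ?A = "\<lambda>j x'. {H::nat \<Rightarrow> 'x \<Rightarrow> nat. \<forall>k\<in>{1..j}. H k x' = H k x}"
  have "measure_pmf.prob ?U {H. estimate PXY lmin \<Delta> N H x y \<noteq> Some x}
      \<le> measure_pmf.prob ?U (\<Union>j\<in>{1..i}. \<Union>x'\<in>?B j. ?A j x')"
    by (rule measure_pmf.finite_measure_mono[OF err_subset[OF i xy]]) simp
  also have "\<dots> \<le> (\<Sum>j\<in>{1..i}. measure_pmf.prob ?U (\<Union>x'\<in>?B j. ?A j x'))"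
    by (rule measure_UNION_le) auto
  also have "\<dots> \<le> (\<Sum>j\<in>{1..i}. 2 powr (lmin + real \<Delta> - real l))"
  proof (rule sum_mono)
    fix j assume j: "j \<in> {1..i}"
    have "measure_pmf.prob ?U (\<Union>x'\<in>?B j. ?A j x') \<le> (\<Sum>x'\<in>?B j. measure_pmf.prob ?U (?A j x'))"
      by (rule measure_UNION_le) auto
    also have "\<dots> \<le> (\<Sum>x'\<in>?B j. 2 powr (-(real l + (real j - 1) * real \<Delta>)))"
      by (rule sum_mono, rule prob_A) (use j i in auto)
    also have "\<dots> = real (card (?B j)) * 2 powr (-(real l + (real j - 1) * real \<Delta>))"
      by simp
    also have "\<dots> \<le> real (card {x'. (x', y) \<in> Tset PXY lmin \<Delta> j}) * 2 powr (-(real l + (real j - 1) * real \<Delta>))"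
      by (rule mult_right_mono) (auto intro: card_mono)
    also have "\<dots> \<le> 2 powr (lmin + real j * real \<Delta>) * 2 powr (-(real l + (real j - 1) * real \<Delta>))"
      by (rule mult_right_mono[OF count_bound]) simp
    also have "\<dots> = 2 powr (lmin + real \<Delta> - real l)"
      by (simp add: powr_add[symmetric] algebra_simps)
    finally show "measure_pmf.prob ?U (\<Union>x'\<in>?B j. ?A j x') \<le> 2 powr (lmin + real \<Delta> - real l)" .
  qed
  also have "\<dots> = real i * 2 powr (lmin + real \<Delta> - real l)" by simp
  finally show ?thesis .
qed

theorem lemma1:
  fixes PXY :: "('x::finite \<times> 'y::finite) pmf"
    and lmin lmax :: real and \<Delta> l N :: nat
  assumes "lmin < lmax" and "\<Delta> > 0" and "N > 0"
    and "real N = (lmax - lmin) / real \<Delta>"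
  shows "\<forall>i\<in>{1..N}. \<forall>(x, y)\<in>Tset PXY lmin \<Delta> i.
     (\<forall>H\<in>hash_space l \<Delta> N. bits_sent PXY lmin l \<Delta> N H x y \<le> l + (i - 1) * \<Delta> + i) \<and>
     (let M = pair_pmf PXY (pmf_of_set (hash_space l \<Delta> N :: (nat \<Rightarrow> 'x \<Rightarrow> nat) set)) in
        measure_pmf.prob M {(xy, H). xy = (x, y) \<and> estimate PXY lmin \<Delta> N H (fst xy) (snd xy) \<noteq> Some (fst xy)}
          / measure_pmf.prob M {(xy, H). xy = (x, y)}
        \<le> real i * 2 powr (lmin + real \<Delta> - real l))"
proof (intro ballI)
  fix i assume i: "i \<in> {1..N}"
  fix p assume p: "p \<in> Tset PXY lmin \<Delta> i"
  obtain x y where pxy: "p = (x, y)" by (cases p)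
  have xy: "(x, y) \<in> Tset PXY lmin \<Delta> i" using p pxy by simp
  let ?S = "hash_space l \<Delta> N :: (nat \<Rightarrow> 'x \<Rightarrow> nat) set"
  let ?U = "pmf_of_set ?S"
  let ?M = "pair_pmf PXY ?U"
  let ?E = "{H. estimate PXY lmin \<Delta> N H x y \<noteq> Some x}"
  have Sne: "?S \<noteq> {}" using hs_nonempty by blast
  have Sf: "finite ?S" by (rule hs_finite)
  have cS: "card ?S > 0" using Sf Sne by (simp add: card_gt_0_iff)
  have setM: "set_pmf ?M = set_pmf PXY \<times> ?S" using Sne Sf by simp
  have part1: "\<forall>H\<in>?S. bits_sent PXY lmin l \<Delta> N H x y \<le> l + (i - 1) * \<Delta> + i"
    using bits_part[OF i xy] by blast
  have c0: "condp PXY x y > 0" using xy by (simp add: Tset_def)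
  have ppos: "pmf PXY (x, y) > 0"
  proof -
    have "pmf PXY (x, y) \<noteq> 0" using c0 by (auto simp: condp_def)
    then show ?thesis using pmf_nonneg[of PXY "(x, y)"] by linarith
  qed
  have UE: "measure_pmf.prob ?U (?S \<inter> ?E) = measure_pmf.prob ?U ?E"
    using measure_Int_set_pmf[of ?U ?E] Sne Sf by (simp add: Int_commute)
  have US: "measure_pmf.prob ?U ?S = 1"
    using measure_pmf_of_set[OF Sne Sf, of ?S] cS by simp
  have num: "measure_pmf.prob ?M {(xy, H). xy = (x, y) \<and> estimate PXY lmin \<Delta> N H (fst xy) (snd xy) \<noteq> Some (fst xy)}
      = pmf PXY (x, y) * measure_pmf.prob ?U ?E"
  proof -
    let ?N0 = "{(xy, H). xy = (x, y) \<and> estimate PXY lmin \<Delta> N H (fst xy) (snd xy) \<noteq> Some (fst xy)}"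
    have "?N0 \<inter> set_pmf ?M = ({(x, y)} \<times> (?S \<inter> ?E)) \<inter> set_pmf ?M"
      unfolding setM by auto
    note eqs = this
    have "measure_pmf.prob ?M ?N0 = measure_pmf.prob ?M (?N0 \<inter> set_pmf ?M)"
      by (rule measure_Int_set_pmf[symmetric])
    also have "\<dots> = measure_pmf.prob ?M (({(x, y)} \<times> (?S \<inter> ?E)) \<inter> set_pmf ?M)" by (simp only: eqs)
    also have "\<dots> = measure_pmf.prob ?M ({(x, y)} \<times> (?S \<inter> ?E))" by (rule measure_Int_set_pmf)
    also have "\<dots> = measure_pmf.prob PXY {(x, y)} * measure_pmf.prob ?U (?S \<inter> ?E)"
      by (rule measure_pmf_prob_product) (use Sf in \<open>auto intro: countable_finite\<close>)
    finally show ?thesis using UE by (simp add: measure_pmf_single)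
  qed
  have den: "measure_pmf.prob ?M {(xy, H). xy = (x, y)} = pmf PXY (x, y)"
  proof -
    let ?N0 = "{(xy, H::nat \<Rightarrow> 'x \<Rightarrow> nat). xy = (x, y)}"
    have "?N0 \<inter> set_pmf ?M = ({(x, y)} \<times> ?S) \<inter> set_pmf ?M"
      unfolding setM by auto
    note eqs = this
    have "measure_pmf.prob ?M ?N0 = measure_pmf.prob ?M (?N0 \<inter> set_pmf ?M)"
      by (rule measure_Int_set_pmf[symmetric])
    also have "\<dots> = measure_pmf.prob ?M (({(x, y)} \<times> ?S) \<inter> set_pmf ?M)" by (simp only: eqs)
    also have "\<dots> = measure_pmf.prob ?M ({(x, y)} \<times> ?S)" by (rule measure_Int_set_pmf)
    also have "\<dots> = measure_pmf.prob PXY {(x, y)} * measure_pmf.prob ?U ?S"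
      by (rule measure_pmf_prob_product) (use Sf in \<open>auto intro: countable_finite\<close>)
    finally show ?thesis using US by (simp add: measure_pmf_single)
  qed
  have part2: "measure_pmf.prob ?M {(xy, H). xy = (x, y) \<and> estimate PXY lmin \<Delta> N H (fst xy) (snd xy) \<noteq> Some (fst xy)}
          / measure_pmf.prob ?M {(xy, H). xy = (x, y)}
        \<le> real i * 2 powr (lmin + real \<Delta> - real l)"
    unfolding num den using ppos err_prob[OF i xy, of l] by simp
  show "case p of (x, y) \<Rightarrow>
     (\<forall>H\<in>hash_space l \<Delta> N. bits_sent PXY lmin l \<Delta> N H x y \<le> l + (i - 1) * \<Delta> + i) \<and>
     (let M = pair_pmf PXY (pmf_of_set (hash_space l \<Delta> N :: (nat \<Rightarrow> 'x \<Rightarrow> nat) set)) in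
        measure_pmf.prob M {(xy, H). xy = (x, y) \<and> estimate PXY lmin \<Delta> N H (fst xy) (snd xy) \<noteq> Some (fst xy)}
          / measure_pmf.prob M {(xy, H). xy = (x, y)}
        \<le> real i * 2 powr (lmin + real \<Delta> - real l))"
    unfolding pxy prod.case Let_def using part1 part2 by (intro conjI)
qed

end
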